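(* Let $s\in\mathcal{Q}=\mathbb{Q}^{\geq0}\cup\{\infty\}$, written $s=q/p$ with $p,q\in\mathbb{N}$ coprime ($\infty=1/0$). Then $P^s_{p-1}\in J_s$ and $Q^s_{q-1}\in J_s$, and $$J_s=\left\langle\{P^s_i\mid 0\leq i<p\}\cup\{Q^s_j\mid 0\leq j<q\}\right\rangle_s .$$
   Context: $J_s=\{(\alpha,\beta)\in\mathbb{Z}^2:\ \alpha\equiv q,\ \beta\equiv p \pmod 2;\ \alpha\geq-q;\ \beta\geq-p;\ \alpha+\beta\leq p+q-2;\ p\alpha+q\beta\geq0\}$. $Z_s=(q,p)+2\mathbb{Z}^2$. $P^s_i=(q+2i,-p)$ and $Q^s_j=(-q,p+2j)$ for $i,j\in\mathbb{Z}$. For $U\subset Z_s$, $\langle U\rangle_s$ denotes the intersection with $Z_s$ of the convex hull of $U$ in $\mathbb{R}^2$. *)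

theory Defs
  imports "HOL-Analysis.Analysis"
begin

text \<open>Parameters: s = q/p with p, q natural numbers, coprime (s = infinity is p = 0, q = 1).\<close>

definition J_s :: "nat \<Rightarrow> nat \<Rightarrow> (int \<times> int) set" where
  "J_s p q = {(a, b). a mod 2 = int q mod 2 \<and> b mod 2 = int p mod 2 \<and>
      a \<ge> - int q \<and> b \<ge> - int p \<and> a + b \<le> int p + int q - 2 \<and>
      int p * a + int q * b \<ge> 0}"

definition Z_s :: "nat \<Rightarrow> nat \<Rightarrow> (int \<times> int) set" where
  "Z_s p q = {(a, b). a mod 2 = int q mod 2 \<and> b mod 2 = int p mod 2}"

definition P_s :: "nat \<Rightarrow> nat \<Rightarrow> int \<Rightarrow> int \<times> int" where
  "P_s p q i = (int q + 2 * i, - int p)"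

definition Q_s :: "nat \<Rightarrow> nat \<Rightarrow> int \<Rightarrow> int \<times> int" where
  "Q_s p q j = (- int q, int p + 2 * j)"

definition to_R2 :: "int \<times> int \<Rightarrow> real \<times> real" where
  "to_R2 z = (real_of_int (fst z), real_of_int (snd z))"

definition hull_s :: "nat \<Rightarrow> nat \<Rightarrow> (int \<times> int) set \<Rightarrow> (int \<times> int) set" where
  "hull_s p q U = {z \<in> Z_s p q. to_R2 z \<in> convex hull (to_R2 ` U)}"

end

theory Submission
  imports Defs
begin

lemma halfplane_convex: "convex {z::real\<times>real. c \<le> a * fst z + b * snd z}"
proof -
  have "{z::real\<times>real. c \<le> a * fst z + b * snd z} = {z. inner (a,b) z \<ge> c}"
    by (auto simp: inner_prod_def)
  then show ?thesis using convex_halfspace_ge by metis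
qed

lemma key:
  fixes p q x y :: real and C :: "(real\<times>real) set"
  assumes p1: "p \<ge> 1" and q1: "q \<ge> 1" and hx: "x \<ge> -q" and hy: "y \<ge> -p"
    and hs: "x + y \<le> p + q - 2" and hl: "p*x + q*y \<ge> 0" and cC: "convex C"
    and A: "(q,-p) \<in> C" and B: "(-q,p) \<in> C" and A2: "(2*p+q-2,-p) \<in> C"
    and B2: "(-q,p+2*q-2) \<in> C"
  shows "(x,y) \<in> C"
proof -
  define X where "X = x + q"
  define Y where "Y = y + p"
  define N where "N = 2*p+2*q-2"
  have X0: "X \<ge> 0" and Y0: "Y \<ge> 0" using hx hy by (auto simp: X_def Y_def)
  have D: "p*X + q*Y \<ge> 2*p*q" using hl by (simp add: X_def Y_def algebra_simps)
  have pq: "p*q > 0" using p1 q1 by simp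
  have Dpos: "p*X + q*Y > 0" using D pq by linarith
  have XYpos: "X + Y > 0"
  proof (rule ccontr)
    assume "\<not> X + Y > 0" then have "X = 0" "Y = 0" using X0 Y0 by auto
    then show False using Dpos by simp
  qed
  have XYN: "X + Y \<le> N" using hs by (simp add: X_def Y_def N_def)
  define \<alpha> where "\<alpha> = 2*p*q / (p*X + q*Y)"
  define \<beta> where "\<beta> = N / (X + Y)"
  have a0: "\<alpha> > 0" using pq Dpos by (simp add: \<alpha>_def)
  have a1: "\<alpha> \<le> 1" using D Dpos by (simp add: \<alpha>_def)
  have b1: "\<beta> \<ge> 1" using XYN XYpos by (simp add: \<beta>_def)
  have aD: "\<alpha> * (p*X + q*Y) = 2*p*q" using Dpos by (simp add: \<alpha>_def)
  have bD: "\<beta> * (X + Y) = N" using XYpos by (simp add: \<beta>_def)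
  define r1 where "r1 = (-q + \<alpha>*X, -p + \<alpha>*Y)"
  define r2 where "r2 = (-q + \<beta>*X, -p + \<beta>*Y)"
  define l where "l = \<alpha>*X/(2*q)"
  have l0: "l \<ge> 0" using a0 X0 q1 by (simp add: l_def)
  have "\<alpha>*(q*Y) \<ge> 0" using a0 q1 Y0 by simp
  moreover have "\<alpha>*(p*X + q*Y) = \<alpha>*(p*X) + \<alpha>*(q*Y)" by (simp add: distrib_left)
  ultimately have "p*(\<alpha>*X) \<le> p*(2*q)" using aD by (simp add: algebra_simps)
  then have "\<alpha>*X \<le> 2*q" using p1 by simp
  then have l1: "l \<le> 1" using q1 by (simp add: l_def)
  have "r1 = l *\<^sub>R (q,-p) + (1-l) *\<^sub>R (-q,p)"
  proof -
    have e1: "-q + \<alpha>*X = l*q + (1-l)*(-q)" using q1 by (simp add: l_def field_simps)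
    have lq: "q*l*2 = \<alpha>*X" using q1 by (simp add: l_def)
    have s1: "q*(l*(-p) + (1-l)*p) = q*p - p*(q*l*2)" by (simp add: algebra_simps)
    have s2: "q*(-p + \<alpha>*Y) = -(q*p) + \<alpha>*(p*X+q*Y) - p*(\<alpha>*X)" by (simp add: algebra_simps)
    have s1': "q*(l*(-p) + (1-l)*p) = q*p - p*(\<alpha>*X)" using s1 lq by simp
    have s2': "q*(-p + \<alpha>*Y) = -(q*p) + 2*p*q - p*(\<alpha>*X)" using s2 aD by simp
    have "q*(-p + \<alpha>*Y) = q*(l*(-p) + (1-l)*p)"
      unfolding s1' s2' by (simp add: algebra_simps)
    then have e2: "-p + \<alpha>*Y = l*(-p) + (1-l)*p" using q1 by simp
    show ?thesis using e1 e2 by (simp add: r1_def)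
  qed
  then have r1C: "r1 \<in> C" using convexD[OF cC A B l0, of "1-l"] l1 by simp
  define m where "m = X/(X+Y)"
  have m0: "m \<ge> 0" and m1: "m \<le> 1" using X0 Y0 XYpos by (auto simp: m_def)
  have "r2 = m *\<^sub>R (2*p+q-2,-p) + (1-m) *\<^sub>R (-q,p+2*q-2)"
  proof -
    have bX: "\<beta>*X = m*N" by (simp add: \<beta>_def m_def)
    have "1 - m = Y/(X+Y)" using XYpos by (simp add: m_def field_simps)
    then have bY: "\<beta>*Y = (1-m)*N" by (simp add: \<beta>_def)
    have e1: "-q + \<beta>*X = m*(2*p+q-2) + (1-m)*(-q)"
      unfolding bX by (simp add: N_def algebra_simps)
    have e2: "-p + \<beta>*Y = m*(-p) + (1-m)*(p+2*q-2)"
      unfolding bY by (simp add: N_def algebra_simps)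
    show ?thesis using e1 e2 by (simp add: r2_def)
  qed
  then have r2C: "r2 \<in> C" using convexD[OF cC A2 B2 m0, of "1-m"] m1 by simp
  show ?thesis
  proof (cases "\<alpha> = 1")
    case True
    then show ?thesis using r1C by (simp add: r1_def X_def Y_def)
  next
    case False
    then have ab: "\<alpha> < \<beta>" using a1 b1 by simp
    define t where "t = (\<beta> - 1)/(\<beta> - \<alpha>)"
    have t0: "t \<ge> 0" and t1: "t \<le> 1" using ab b1 a1 by (auto simp: t_def field_simps)
    have tb: "t*(\<beta>-\<alpha>) = \<beta>-1" using ab by (simp add: t_def)
    have "t*\<alpha> + (1-t)*\<beta> = \<beta> - t*(\<beta>-\<alpha>)" by (simp add: algebra_simps)
    then have tt: "t*\<alpha> + (1-t)*\<beta> = 1" using tb by simp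
    have "(x,y) = t *\<^sub>R r1 + (1-t) *\<^sub>R r2"
    proof -
      have "x = t*(-q + \<alpha>*X) + (1-t)*(-q + \<beta>*X)"
      proof -
        have "t*(-q + \<alpha>*X) + (1-t)*(-q + \<beta>*X) = -q + (t*\<alpha> + (1-t)*\<beta>)*X"
          by (simp add: algebra_simps)
        then show ?thesis using tt by (simp add: X_def)
      qed
      moreover have "y = t*(-p + \<alpha>*Y) + (1-t)*(-p + \<beta>*Y)"
      proof -
        have "t*(-p + \<alpha>*Y) + (1-t)*(-p + \<beta>*Y) = -p + (t*\<alpha> + (1-t)*\<beta>)*Y"
          by (simp add: algebra_simps)
        then show ?thesis using tt by (simp add: Y_def)
      qed
      ultimately show ?thesis by (simp add: r1_def r2_def)
    qed
    then show ?thesis using convexD[OF cC r1C r2C t0, of "1-t"] t1 by simp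
  qed
qed

lemma to_R2_P: "to_R2 (P_s p q i) = (real q + 2 * real_of_int i, - real p)"
  by (simp add: to_R2_def P_s_def)
lemma to_R2_Q: "to_R2 (Q_s p q j) = (- real q, real p + 2 * real_of_int j)"
  by (simp add: to_R2_def Q_s_def)

lemma J_iff: "(a,b) \<in> J_s p q \<longleftrightarrow> a mod 2 = int q mod 2 \<and> b mod 2 = int p mod 2 \<and>
      a \<ge> - int q \<and> b \<ge> - int p \<and> a + b \<le> int p + int q - 2 \<and>
      int p * a + int q * b \<ge> 0"
  by (simp add: J_s_def)

theorem lemma4:
  fixes p q :: nat
  assumes "coprime p q"
  shows "P_s p q (int p - 1) \<in> J_s p q \<and> Q_s p q (int q - 1) \<in> J_s p q \<and>
    J_s p q = hull_s p q ({P_s p q (int i) | i. i < p} \<union> {Q_s p q (int j) | j. j < q})"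
proof -
  have pq1: "p + q \<ge> 1"
  proof (rule ccontr)
    assume "\<not> p + q \<ge> 1" then have "p = 0" "q = 0" by auto
    then show False using assms by simp
  qed
  define S where "S = {P_s p q (int i) | i. i < p} \<union> {Q_s p q (int j) | j. j < q}"
  define C where "C = convex hull (to_R2 ` S)"
  define K where "K = {z::real\<times>real. - real q \<le> 1 * fst z + 0 * snd z}
     \<inter> {z. - real p \<le> 0 * fst z + 1 * snd z}
     \<inter> {z. - (real p + real q - 2) \<le> (-1) * fst z + (-1) * snd z}
     \<inter> {z. 0 \<le> real p * fst z + real q * snd z}"
  have cK: "convex K" unfolding K_def by (intro convex_Int halfplane_convex)
  have SK: "to_R2 ` S \<subseteq> K"
  proof
    fix z assume "z \<in> to_R2 ` S"
    then obtain w where w: "w \<in> S" "z = to_R2 w" by auto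
    show "z \<in> K"
    proof (cases "\<exists>i. i < p \<and> w = P_s p q (int i)")
      case True
      then obtain i where i: "i < p" "w = P_s p q (int i)" by auto
      have "real i \<le> real p - 1" using i by linarith
      then show ?thesis using i w by (simp add: K_def to_R2_P algebra_simps)
    next
      case False
      then obtain j where j: "j < q" "w = Q_s p q (int j)" using w S_def by auto
      have "real j \<le> real q - 1" using j by linarith
      then show ?thesis using j w by (simp add: K_def to_R2_Q algebra_simps)
    qed
  qed
  have CK: "C \<subseteq> K" unfolding C_def using SK cK by (rule hull_minimal)
  have SC: "to_R2 ` S \<subseteq> C" unfolding C_def by (rule hull_subset)
  have n1: "0 \<le> int p * (2*int p - 2)" by (cases "p = 0") (auto intro: mult_nonneg_nonneg)
  have n2: "0 \<le> int q * (2*int q - 2)" by (cases "q = 0") (auto intro: mult_nonneg_nonneg)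
  have m1: "(int q + (2*int p - 2)) mod 2 = int q mod 2" "- int p mod 2 = int p mod 2"
    "(int p + (2*int q - 2)) mod 2 = int p mod 2" "- int q mod 2 = int q mod 2" by presburger+
  have part1: "P_s p q (int p - 1) \<in> J_s p q"
    using pq1 n1 m1 by (simp add: P_s_def J_s_def algebra_simps)
  have part2: "Q_s p q (int q - 1) \<in> J_s p q"
    using pq1 n2 m1 by (simp add: Q_s_def J_s_def algebra_simps)
  have sub1: "hull_s p q S \<subseteq> J_s p q"
  proof
    fix z assume z: "z \<in> hull_s p q S"
    obtain a b where ab: "z = (a,b)" by fastforce
    have zZ: "z \<in> Z_s p q" and zC: "to_R2 z \<in> C" using z by (auto simp: hull_s_def C_def)
    then have "to_R2 z \<in> K" using CK by auto
    then have r1: "- real q \<le> real_of_int a" and r2: "- real p \<le> real_of_int b"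
      and r3: "real_of_int a + real_of_int b \<le> real p + real q - 2"
      and r4: "0 \<le> real p * real_of_int a + real q * real_of_int b"
      by (auto simp: K_def to_R2_def ab)
    have i1: "- int q \<le> a" using r1 by linarith
    have i2: "- int p \<le> b" using r2 by linarith
    have i3: "a + b \<le> int p + int q - 2" using r3 by linarith
    have "real_of_int (int p * a + int q * b) \<ge> 0" using r4 by simp
    then have i4: "int p * a + int q * b \<ge> 0" by linarith
    show "z \<in> J_s p q" using zZ i1 i2 i3 i4 by (simp add: ab J_s_def Z_s_def)
  qed
  have sub2: "J_s p q \<subseteq> hull_s p q S"
  proof
    fix z assume zJ: "z \<in> J_s p q"
    obtain a b where ab: "z = (a,b)" by fastforce
    have zZ: "z \<in> Z_s p q" using zJ by (simp add: ab J_s_def Z_s_def)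
    have h: "a mod 2 = int q mod 2" "b mod 2 = int p mod 2" "a \<ge> - int q" "b \<ge> - int p"
      "a + b \<le> int p + int q - 2" "int p * a + int q * b \<ge> 0"
      using zJ by (simp_all add: ab J_s_def)
    have "to_R2 z \<in> C"
    proof (cases "p = 0")
      case True
      then have q: "q = 1" using assms by simp
      have "z = Q_s p q (int 0)" using h True q by (simp add: ab Q_s_def)
      then have "z \<in> S" using q by (auto simp: S_def)
      then show ?thesis using SC by auto
    next
      case p0: False
      show ?thesis
      proof (cases "q = 0")
        case True
        then have p: "p = 1" using assms by simp
        have "z = P_s p q (int 0)" using h True p by (simp add: ab P_s_def)
        then have "z \<in> S" using p by (auto simp: S_def)
        then show ?thesis using SC by auto
      next
        case q0: False
        have P0: "P_s p q (int 0) \<in> S" using p0 by (auto simp: S_def)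
        have P1: "P_s p q (int (p-1)) \<in> S" unfolding S_def
          using p0 by (intro UnI1 CollectI exI[of _ "p-1"]) simp
        have Q0: "Q_s p q (int 0) \<in> S" using q0 by (auto simp: S_def)
        have Q1: "Q_s p q (int (q-1)) \<in> S" unfolding S_def
          using q0 by (intro UnI2 CollectI exI[of _ "q-1"]) simp
        have "to_R2 (P_s p q (int 0)) \<in> C" using SC P0 by blast
        then have A: "(real q, - real p) \<in> C" by (simp add: to_R2_P)
        have "to_R2 (Q_s p q (int 0)) \<in> C" using SC Q0 by blast
        then have B: "(- real q, real p) \<in> C" by (simp add: to_R2_Q)
        have eA2: "to_R2 (P_s p q (int (p-1))) = (2 * real p + real q - 2, - real p)"
          using p0 by (simp add: to_R2_P of_nat_diff algebra_simps)
        have eB2: "to_R2 (Q_s p q (int (q-1))) = (- real q, real p + 2 * real q - 2)"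
          using q0 by (simp add: to_R2_Q of_nat_diff algebra_simps)
        have A2: "(2 * real p + real q - 2, - real p) \<in> C" using SC P1 unfolding eA2[symmetric] by blast
        have B2: "(- real q, real p + 2 * real q - 2) \<in> C" using SC Q1 unfolding eB2[symmetric] by blast
        have r1: "real_of_int a \<ge> - real q" using h(3) by linarith
        have r2: "real_of_int b \<ge> - real p" using h(4) by linarith
        have r3: "real_of_int a + real_of_int b \<le> real p + real q - 2" using h(5) by linarith
        have "real_of_int (int p * a + int q * b) \<ge> 0" using h(6) by linarith
        then have r4: "real p * real_of_int a + real q * real_of_int b \<ge> 0" by simp
        have "(real_of_int a, real_of_int b) \<in> C"
        proof (rule key[OF _ _ r1 r2 r3 r4 _ A B A2 B2])
          show "1 \<le> real p" using p0 by simp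
          show "1 \<le> real q" using q0 by simp
          show "convex C" unfolding C_def by (rule convex_convex_hull)
        qed
        then show ?thesis by (simp add: ab to_R2_def)
      qed
    qed
    then show "z \<in> hull_s p q S" using zZ by (simp add: hull_s_def C_def)
  qed
  show ?thesis using part1 part2 sub1 sub2 unfolding S_def by blast
qed

end
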